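(* Let $1\le\ell\le r$ and $0\le k\le\ell-1$. Every ideal $I$ of $R_\ell$ with $J_{\ell,k+1}(0)\subseteq I\subseteq J_{\ell,k}(0)$ is of the form $$I=J_{\ell,k+1}(0)+(nF_{\ell,k})=(nF_{\ell,k},F_{\ell,k+1},F_{\ell,k+2},\dots,F_{\ell,\ell-1})$$ for some $n\in\mathbb{Z}$.
   Context: Fix a prime $p$ and an integer $r\ge0$. For $0\le k\le r$ let $R_k$ be the commutative ring which is free as a $\mathbb{Z}$-module with basis $X_{k,0},\dots,X_{k,k}$ and multiplication $X_{k,i}X_{k,j}=p^{k-\max(i,j)}X_{k,\min(i,j)}$; thus $X_{k,k}=1$, and an integer $n$ is identified with $nX_{k,k}$. For $0\le i\le\ell\le r$ put $F_{\ell,i}=X_{\ell,i}-p^{\ell-i}\in R_\ell$. For $0\le k\le\ell$ and $x\in\mathbb{Z}$, $J_{\ell,k}(x)\subseteq R_\ell$ is the ideal generated by $x,F_{\ell,k},F_{\ell,k+1},\dots,F_{\ell,\ell-1}$ if $k\le\ell-1$, and $J_{\ell,\ell}(x)=xR_\ell$ (so $J_{\ell,\ell}(0)=0$). *)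

theory Defs
  imports "HOL-Algebra.Ideal" "HOL-Computational_Algebra.Primes"
begin

text \<open>The ring R_l (depending on the prime p): elements are integer coefficient
  vectors f on the basis X_{l,0},...,X_{l,l}, i.e. functions nat => int vanishing above l.
  f i is the coefficient of X_{l,i}.\<close>

definition Rcarrier :: "nat \<Rightarrow> (nat \<Rightarrow> int) set" where
  "Rcarrier l = {f. \<forall>i>l. f i = 0}"

definition Rmult :: "int \<Rightarrow> nat \<Rightarrow> (nat \<Rightarrow> int) \<Rightarrow> (nat \<Rightarrow> int) \<Rightarrow> (nat \<Rightarrow> int)" where
  "Rmult p l f g = (\<lambda>m. if m \<le> l then
      (\<Sum>i\<le>l. \<Sum>j\<le>l. if min i j = m then p ^ (l - max i j) * f i * g j else 0) else 0)"

definition X :: "nat \<Rightarrow> (nat \<Rightarrow> int)" where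
  "X i = (\<lambda>m. if m = i then 1 else 0)"

text \<open>integer n identified with n X_{l,l}\<close>
definition Rint :: "nat \<Rightarrow> int \<Rightarrow> (nat \<Rightarrow> int)" where
  "Rint l n = (\<lambda>m. if m = l then n else 0)"

definition Rring :: "int \<Rightarrow> nat \<Rightarrow> (nat \<Rightarrow> int) ring" where
  "Rring p l = \<lparr>carrier = Rcarrier l, monoid.mult = Rmult p l, one = X l,
     zero = (\<lambda>_. 0), add = (\<lambda>f g m. f m + g m)\<rparr>"

definition F :: "int \<Rightarrow> nat \<Rightarrow> nat \<Rightarrow> (nat \<Rightarrow> int)" where
  "F p l i = (\<lambda>m. X i m - Rint l (p ^ (l - i)) m)"

definition J :: "int \<Rightarrow> nat \<Rightarrow> nat \<Rightarrow> int \<Rightarrow> (nat \<Rightarrow> int) set" where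
  "J p l k x = genideal (Rring p l) (insert (Rint l x) {F p l i | i. k \<le> i \<and> i < l})"

end

theory Submission
  imports Defs
begin


definition eps :: "int \<Rightarrow> nat \<Rightarrow> (nat \<Rightarrow> int) \<Rightarrow> int" where
  "eps p l f = (\<Sum>i\<le>l. p ^ (l - i) * f i)"

definition A :: "int \<Rightarrow> nat \<Rightarrow> nat \<Rightarrow> (nat \<Rightarrow> int) set" where
  "A p l k = {f \<in> Rcarrier l. (\<forall>m<k. f m = 0) \<and> eps p l f = 0}"

lemma Rint_mult:
  assumes "f \<in> Rcarrier l"
  shows "Rmult p l (Rint l c) f = (\<lambda>m. c * f m)"
proof
  fix m
  show "Rmult p l (Rint l c) f m = c * f m"
  proof (cases "m \<le> l")
    case True
    have "(\<Sum>i\<le>l. \<Sum>j\<le>l. if min i j = m then p ^ (l - max i j) * Rint l c i * f j else 0)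
        = (\<Sum>i\<le>l. if i = l then (\<Sum>j\<le>l. if j = m then c * f j else 0) else 0)"
    proof (rule sum.cong[OF refl])
      fix i assume i: "i \<in> {..l}"
      show "(\<Sum>j\<le>l. if min i j = m then p ^ (l - max i j) * Rint l c i * f j else 0)
         = (if i = l then (\<Sum>j\<le>l. if j = m then c * f j else 0) else 0)"
      proof (cases "i = l")
        case True
        have "(\<Sum>j\<le>l. if min l j = m then p ^ (l - max l j) * Rint l c l * f j else 0)
            = (\<Sum>j\<le>l. if j = m then c * f j else 0)"
          by (intro sum.cong refl) (auto simp: Rint_def min_def max_def)
        then show ?thesis using True by (simp add: Rint_def)
      next
        case False
        then show ?thesis by (auto intro!: sum.neutral simp: Rint_def)
      qed
    qed
    also have "\<dots> = c * f m" using True by simp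
    finally show ?thesis using True by (simp add: Rmult_def)
  next
    case False
    then show ?thesis using assms by (simp add: Rmult_def Rcarrier_def)
  qed
qed

lemma Rmult_comm: "Rmult p l f g = Rmult p l g f"
proof
  fix m
  have "(\<Sum>i\<le>l. \<Sum>j\<le>l. if min i j = m then p ^ (l - max i j) * f i * g j else 0)
      = (\<Sum>j\<le>l. \<Sum>i\<le>l. if min i j = m then p ^ (l - max i j) * f i * g j else 0)"
    by (rule sum.swap)
  also have "\<dots> = (\<Sum>j\<le>l. \<Sum>i\<le>l. if min j i = m then p ^ (l - max j i) * g j * f i else 0)"
    by (intro sum.cong refl) (auto simp: max_def min_def mult_ac)
  finally show "Rmult p l f g m = Rmult p l g f m" unfolding Rmult_def by simp
qed

lemma eps_mult:
  shows "eps p l (Rmult p l g f) = eps p l g * eps p l f"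
proof -
  have "eps p l (Rmult p l g f) = (\<Sum>m\<le>l. \<Sum>i\<le>l. \<Sum>j\<le>l.
      if min i j = m then p ^ (l - m) * (p ^ (l - max i j) * g i * f j) else 0)"
    unfolding eps_def Rmult_def
    by (simp add: sum_distrib_left if_distrib cong: if_cong)
  also have "\<dots> = (\<Sum>i\<le>l. \<Sum>j\<le>l. \<Sum>m\<le>l.
      if min i j = m then p ^ (l - m) * (p ^ (l - max i j) * g i * f j) else 0)"
    by (subst sum.swap, rule sum.cong[OF refl], subst sum.swap, rule refl)
  also have "\<dots> = (\<Sum>i\<le>l. \<Sum>j\<le>l. (p ^ (l - i) * g i) * (p ^ (l - j) * f j))"
  proof (rule sum.cong[OF refl], rule sum.cong[OF refl])
    fix i j assume "i \<in> {..l}" "j \<in> {..l}"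
    then have "min i j \<le> l" by simp
    then have "(\<Sum>m\<le>l. if min i j = m then p ^ (l - m) * (p ^ (l - max i j) * g i * f j) else 0)
        = p ^ (l - min i j) * (p ^ (l - max i j) * g i * f j)"
      by (simp add: sum.delta)
    also have "\<dots> = (p ^ (l - i) * g i) * (p ^ (l - j) * f j)"
      by (cases "i \<le> j") (simp_all add: min_def max_def mult_ac)
    finally show "(\<Sum>m\<le>l. if min i j = m then p ^ (l - m) * (p ^ (l - max i j) * g i * f j) else 0)
        = (p ^ (l - i) * g i) * (p ^ (l - j) * f j)" .
  qed
  also have "\<dots> = eps p l g * eps p l f"
    unfolding eps_def by (simp add: sum_product)
  finally show ?thesis .
qed

lemma eps_add: "eps p l (\<lambda>m. f m + g m) = eps p l f + eps p l g"
  by (simp add: eps_def algebra_simps sum.distrib)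
lemma eps_diff: "eps p l (\<lambda>m. f m - g m) = eps p l f - eps p l g"
  by (simp add: eps_def algebra_simps sum_subtractf)
lemma eps_neg: "eps p l (\<lambda>m. - f m) = - eps p l f"
  by (simp add: eps_def sum_negf)
lemma eps_smult: "eps p l (\<lambda>m. c * f m) = c * eps p l f"
  by (simp add: eps_def sum_distrib_left mult_ac)

lemma Rmult_carrier: "Rmult p l f g \<in> Rcarrier l"
  by (simp add: Rcarrier_def Rmult_def)

lemma low:
  assumes f: "f \<in> A p l k" and m: "m < k"
  shows "Rmult p l g f m = 0"
proof (cases "m \<le> l")
  case True
  have fz: "\<And>j. j < k \<Longrightarrow> f j = 0" using f by (auto simp: A_def)
  have "(\<Sum>i\<le>l. \<Sum>j\<le>l. if min i j = m then p ^ (l - max i j) * g i * f j else 0)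
      = (\<Sum>i\<le>l. if i = m then (\<Sum>j\<le>l. p ^ (l - j) * g m * f j) else 0)"
  proof (rule sum.cong[OF refl])
    fix i
    show "(\<Sum>j\<le>l. if min i j = m then p ^ (l - max i j) * g i * f j else 0)
      = (if i = m then (\<Sum>j\<le>l. p ^ (l - j) * g m * f j) else 0)"
    proof (cases "i = m")
      case True
      have "(if min i j = m then p ^ (l - max i j) * g i * f j else 0) = p ^ (l - j) * g m * f j" for j
        using True m fz[of j] by (cases "j < k") (auto simp: min_def max_def)
      then show ?thesis using True by simp
    next
      case False
      have "(if min i j = m then p ^ (l - max i j) * g i * f j else 0) = 0" for j
        using False m fz[of j] by (cases "j < k") (auto simp: min_def max_def)
      then show ?thesis using False by simp
    qed
  qed
  also have "\<dots> = g m * eps p l f" using True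
    by (simp add: eps_def sum_distrib_left mult_ac)
  also have "\<dots> = 0" using f by (simp add: A_def)
  finally show ?thesis using True by (simp add: Rmult_def)
next
  case False
  then show ?thesis by (simp add: Rmult_def)
qed

lemma F_carrier: "i \<le> l \<Longrightarrow> F p l i \<in> Rcarrier l"
  by (simp add: F_def Rcarrier_def X_def Rint_def)

lemma eps_F: assumes "i \<le> l" shows "eps p l (F p l i) = 0"
proof -
  have 1: "(\<lambda>m. p ^ (l - m) * X i m) = (\<lambda>m. if m = i then p ^ (l - i) else 0)"
    by (auto simp: X_def)
  have 2: "(\<lambda>m. p ^ (l - m) * Rint l (p ^ (l - i)) m) = (\<lambda>m. if m = l then p ^ (l - i) else 0)"
    by (auto simp: Rint_def)
  show ?thesis using assms
    unfolding eps_def F_def right_diff_distrib sum_subtractf 1 2 by simp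
qed

lemma F_A: "k \<le> i \<Longrightarrow> i < l \<Longrightarrow> F p l i \<in> A p l k"
  using F_carrier[of i l p] eps_F[of i l p]
  by (auto simp: A_def F_def X_def Rint_def)


lemma Rmult_A:
  assumes a: "a \<in> A p l k"
  shows "Rmult p l x a \<in> A p l k"
proof -
  have "eps p l a = 0" using a by (simp add: A_def)
  then have "eps p l (Rmult p l x a) = 0" by (simp add: eps_mult)
  moreover have "\<forall>m<k. Rmult p l x a m = 0" using low[OF a] by blast
  ultimately show ?thesis using Rmult_carrier[of p l x a] unfolding A_def by blast
qed



lemma A_ideal:
  assumes "ring (Rring p l)"
  shows "ideal (A p l k) (Rring p l)"
proof -
  interpret R: ring "Rring p l" by fact
  have neg: "\<And>f. f \<in> Rcarrier l \<Longrightarrow> \<ominus>\<^bsub>Rring p l\<^esub> f = (\<lambda>m. - f m)"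
    by (rule R.minus_equality) (auto simp: Rring_def Rcarrier_def)
  have z: "(\<lambda>_. 0) \<in> A p l k" by (simp add: A_def Rcarrier_def eps_def)
  have mul: "\<And>x y. x \<otimes>\<^bsub>Rring p l\<^esub> y = Rmult p l x y" by (simp add: Rring_def)
  have add: "\<And>x y. x \<oplus>\<^bsub>Rring p l\<^esub> y = (\<lambda>m. x m + y m)" by (simp add: Rring_def)
  have car: "carrier (Rring p l) = Rcarrier l" by (simp add: Rring_def)
  show ?thesis
    apply (rule idealI[OF assms])
     apply (rule R.add.subgroupI)
    subgoal unfolding car A_def by blast
    subgoal using z by blast
    subgoal for a
    proof -
      assume a: "a \<in> A p l k"
      then have "a \<in> Rcarrier l" "\<forall>m<k. a m = 0" "eps p l a = 0" by (auto simp: A_def)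
      then show ?thesis unfolding neg[OF \<open>a \<in> Rcarrier l\<close>] A_def Rcarrier_def using eps_neg[of p l a] by auto
    qed
    subgoal for a b
    proof -
      assume "a \<in> A p l k" "b \<in> A p l k"
      then show ?thesis unfolding add A_def Rcarrier_def using eps_add[of p l a b] by auto
    qed
    subgoal for a x unfolding mul by (rule Rmult_A)
    subgoal for a x unfolding mul Rmult_comm[of p l a x] by (rule Rmult_A)
    done
qed


lemma A_sub:
  assumes R: "ring (Rring p l)" and K: "ideal K (Rring p l)"
    and G: "{F p l i | i. k + 1 \<le> i \<and> i < l} \<subseteq> K"
  shows "A p l (k + 1) \<subseteq> K"
proof -
  interpret K: ideal K "Rring p l" by fact
  have mul: "\<And>x y. x \<otimes>\<^bsub>Rring p l\<^esub> y = Rmult p l x y" by (simp add: Rring_def)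
  have add: "\<And>x y. x \<oplus>\<^bsub>Rring p l\<^esub> y = (\<lambda>m. x m + y m)" by (simp add: Rring_def)
  have car: "carrier (Rring p l) = Rcarrier l" by (simp add: Rring_def)
  have z0: "(\<lambda>_. 0) \<in> K" using additive_subgroup.zero_closed[OF ideal.axioms(1)[OF K]] by (simp add: Rring_def)
  have "\<forall>f. f \<in> Rcarrier l \<and> eps p l f = 0 \<and> (\<forall>m < max (k+1) (l - d). f m = 0) \<longrightarrow> f \<in> K" for d
  proof (induction d)
    case 0
    show ?case
    proof (intro allI impI)
      fix f assume f: "f \<in> Rcarrier l \<and> eps p l f = 0 \<and> (\<forall>m < max (k+1) (l - 0). f m = 0)"
      have fl: "\<forall>m<l. f m = 0" using f by auto
      have "eps p l f = f l"
        unfolding eps_def using fl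
        by (subst sum.mono_neutral_cong_right[of "{..l}" "{l}"]) auto
      then have fl2: "f l = 0" using f by simp
      have "f m = 0" for m
      proof (cases "m < l")
        case True then show ?thesis using fl by blast
      next
        case False
        then have "m = l \<or> m > l" by auto
        then show ?thesis using fl2 f by (auto simp: Rcarrier_def)
      qed
      then have "f = (\<lambda>_. 0)" by (simp add: fun_eq_iff)
      then show "f \<in> K" using z0 by simp
    qed
  next
    case (Suc d)
    show ?case
    proof (intro allI impI)
      fix f assume f: "f \<in> Rcarrier l \<and> eps p l f = 0 \<and> (\<forall>m < max (k+1) (l - Suc d). f m = 0)"
      show "f \<in> K"
      proof (cases "l - Suc d < k + 1")
        case True
        then have "max (k+1) (l - Suc d) = max (k+1) (l - d)" by auto
        then show ?thesis using Suc f by auto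
      next
        case False
        define j where "j = l - Suc d"
        have j: "k + 1 \<le> j" "j < l" "l - d = Suc j" using False unfolding j_def by auto
        define g where "g = (\<lambda>m. f m - f j * F p l j m)"
        have Fj: "F p l j \<in> Rcarrier l" by (rule F_carrier) (use j in simp)
        have gc: "g \<in> Rcarrier l" using f Fj by (auto simp: g_def Rcarrier_def)
        have ge: "eps p l g = 0" unfolding g_def eps_diff eps_smult using f eps_F[of j l p] j by simp
        have gz: "\<forall>m < max (k+1) (l - d). g m = 0"
        proof (intro allI impI)
          fix m assume m: "m < max (k+1) (l - d)"
          show "g m = 0"
          proof (cases "m = j")
            case True then show ?thesis using j by (simp add: g_def F_def X_def Rint_def)
          next
            case False
            then have "m < max (k+1) (l - Suc d)" using m j unfolding j_def by auto
            moreover have "m \<noteq> l" using m j by auto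
            ultimately show ?thesis using f False j by (simp add: g_def F_def X_def Rint_def)
          qed
        qed
        have gK: "g \<in> K" using Suc gc ge gz by blast
        have FK: "F p l j \<in> K" using G j by blast
        have "Rint l (f j) \<otimes>\<^bsub>Rring p l\<^esub> F p l j \<in> K"
          by (rule K.I_l_closed[OF FK]) (simp add: car Rcarrier_def Rint_def)
        then have hK: "(\<lambda>m. f j * F p l j m) \<in> K" unfolding mul Rint_mult[OF Fj] .
        have "g \<oplus>\<^bsub>Rring p l\<^esub> (\<lambda>m. f j * F p l j m) \<in> K" using gK hK by simp
        moreover have "g \<oplus>\<^bsub>Rring p l\<^esub> (\<lambda>m. f j * F p l j m) = f"
          unfolding add g_def by simp
        ultimately show ?thesis by simp
      qed
    qed
  qed
  from this[of l] show ?thesis by (auto simp: A_def)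
qed



lemma int_subgroup_principal:
  fixes S :: "int set"
  assumes "0 \<in> S" and sub: "\<And>a b. a \<in> S \<Longrightarrow> b \<in> S \<Longrightarrow> a - b \<in> S"
  shows "\<exists>n\<in>S. \<forall>s\<in>S. n dvd s"
proof (cases "\<exists>x\<in>S. x > 0")
  case False
  have "s = 0" if "s \<in> S" for s
  proof -
    have "0 - s \<in> S" using sub assms(1) that by blast
    then have "\<not> s > 0" "\<not> 0 - s > 0" using False that by auto
    then show ?thesis by linarith
  qed
  then show ?thesis using assms(1) by blast
next
  case True
  define N where "N = (LEAST x::nat. x > 0 \<and> int x \<in> S)"
  obtain x0 where x0: "x0 \<in> S" "x0 > 0" using True by blast
  have ex: "nat x0 > 0 \<and> int (nat x0) \<in> S" using x0 by simp
  have N: "N > 0 \<and> int N \<in> S" unfolding N_def by (rule LeastI[of "\<lambda>x. x > 0 \<and> int x \<in> S", OF ex])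
  have "int N dvd s" if s: "s \<in> S" for s
  proof -
    have "\<forall>q::nat. s - int q * int N \<in> S"
    proof
      fix q show "s - int q * int N \<in> S"
      proof (induction q)
        case 0 then show ?case using s by simp
      next
        case (Suc q)
        have "s - int q * int N - int N \<in> S" using sub[OF Suc N[THEN conjunct2]] .
        then show ?case by (simp add: algebra_simps)
      qed
    qed
    moreover have "\<forall>q::nat. s + int q * int N \<in> S"
    proof
      fix q show "s + int q * int N \<in> S"
      proof (induction q)
        case 0 then show ?case using s by simp
      next
        case (Suc q)
        have "0 - int N \<in> S" using sub[OF assms(1) N[THEN conjunct2]] .
        from sub[OF Suc this] show ?case by (simp add: algebra_simps)
      qed
    qed
    ultimately have "s - (s div int N) * int N \<in> S"
    proof (cases "s div int N \<ge> 0")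
      case True
      then have "int (nat (s div int N)) = s div int N" by simp
      then show ?thesis using \<open>\<forall>q::nat. s - int q * int N \<in> S\<close>[rule_format, of "nat (s div int N)"] by simp
    next
      case False
      then have e: "int (nat (- (s div int N))) = - (s div int N)" by simp
      have "s + int (nat (- (s div int N))) * int N \<in> S"
        using \<open>\<forall>q::nat. s + int q * int N \<in> S\<close> by blast
      then show ?thesis unfolding e by simp
    qed
    then have r: "s mod int N \<in> S" by (simp add: minus_div_mult_eq_mod)
    have "s mod int N = 0"
    proof (rule ccontr)
      assume "s mod int N \<noteq> 0"
      then have pos: "s mod int N > 0" using N pos_mod_sign[of "int N" s] by linarith
      have N1: "nat (s mod int N) > 0 \<and> int (nat (s mod int N)) \<in> S" using pos r by simp
      have "N \<le> nat (s mod int N)"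
        using Least_le[of "\<lambda>x. x > 0 \<and> int x \<in> S", OF N1] unfolding N_def .
      moreover have "s mod int N < int N" using N by simp
      ultimately have "int N \<le> int (nat (s mod int N))" "s mod int N < int N" by simp_all
      then show False using pos by simp
    qed
    then show ?thesis by (simp add: dvd_eq_mod_eq_0)
  qed
  then show ?thesis using N by blast
qed



theorem lemma6:
  fixes p :: int and r l k :: nat and I :: "(nat \<Rightarrow> int) set"
  assumes "prime p" and "1 \<le> l" and "l \<le> r" and "k \<le> l - 1"
    and "ideal I (Rring p l)"
    and "J p l (k + 1) 0 \<subseteq> I" and "I \<subseteq> J p l k 0"
  shows "\<exists>n::int. I = genideal (Rring p l)
            (insert (Rmult p l (Rint l n) (F p l k)) {F p l i | i. k + 1 \<le> i \<and> i < l})"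
proof -
  interpret I: ideal I "Rring p l" by fact
  have R: "ring (Rring p l)" by (rule I.ring_axioms)
  have kl: "k < l" using assms(2,4) by simp
  define Gs where "Gs = {F p l i | i. k + 1 \<le> i \<and> i < l}"
  have car: "carrier (Rring p l) = Rcarrier l" by (simp add: Rring_def)
  have mul: "\<And>x y. x \<otimes>\<^bsub>Rring p l\<^esub> y = Rmult p l x y" by (simp add: Rring_def)
  have add: "\<And>x y. x \<oplus>\<^bsub>Rring p l\<^esub> y = (\<lambda>m. x m + y m)" by (simp add: Rring_def)
  have Gc: "Gs \<subseteq> carrier (Rring p l)" using F_carrier by (force simp: Gs_def car)
  have r0: "Rint l 0 = (\<lambda>_. 0)" by (simp add: Rint_def fun_eq_iff)
  have rc: "\<And>c. Rint l c \<in> carrier (Rring p l)" by (simp add: car Rcarrier_def Rint_def)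
  define J1 where "J1 = J p l (k+1) 0"
  have J1i: "ideal J1 (Rring p l)" unfolding J1_def J_def
    by (rule I.genideal_ideal) (use Gc rc in \<open>auto simp: Gs_def\<close>)
  have GJ1: "Gs \<subseteq> J1" unfolding J1_def J_def Gs_def
    using I.genideal_self[of "insert (Rint l 0) Gs"] Gc rc by (auto simp: Gs_def)
  have AJ1: "A p l (k+1) \<subseteq> J1" by (rule A_sub[OF R J1i]) (use GJ1 in \<open>simp add: Gs_def\<close>)
  have AI: "A p l (k+1) \<subseteq> I" using AJ1 assms(6) J1_def by blast
  have z0: "(\<lambda>_. 0) \<in> A p l k" by (simp add: A_def Rcarrier_def eps_def)
  have "J p l k 0 \<subseteq> A p l k" unfolding J_def
    by (rule I.genideal_minimal[OF A_ideal[OF R]]) (use z0 F_A in \<open>auto simp: r0\<close>)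
  then have IA: "I \<subseteq> A p l k" using assms(7) by blast
  have Fk: "F p l k \<in> Rcarrier l" using F_carrier kl by simp
  have dec: "(\<lambda>m. f m - f k * F p l k m) \<in> A p l (k+1)" if f: "f \<in> A p l k" for f
  proof -
    have fc: "f \<in> Rcarrier l" "\<forall>m<k. f m = 0" "eps p l f = 0" using f by (auto simp: A_def)
    have "eps p l (\<lambda>m. f m - f k * F p l k m) = 0"
      unfolding eps_diff eps_smult using fc eps_F[of k l p] kl by simp
    moreover have "(\<lambda>m. f m - f k * F p l k m) \<in> Rcarrier l" using fc Fk by (auto simp: Rcarrier_def)
    moreover have "\<forall>m<k+1. f m - f k * F p l k m = 0"
    proof (intro allI impI)
      fix m assume "m < k + 1"
      then have "m < k \<or> m = k" by auto
      then show "f m - f k * F p l k m = 0" using fc kl by (auto simp: F_def X_def Rint_def)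
    qed
    ultimately show ?thesis unfolding A_def by blast
  qed
  have Ic: "I \<subseteq> Rcarrier l" using I.a_subset car by simp
  have sc: "(\<lambda>m. c * f m) \<in> I" if "f \<in> I" for f c
  proof -
    have "Rint l c \<otimes>\<^bsub>Rring p l\<^esub> f \<in> I" by (rule I.I_l_closed[OF that rc])
    moreover have fc: "f \<in> Rcarrier l" using Ic that by blast
    ultimately show ?thesis unfolding mul Rint_mult[OF fc] by blast
  qed
  have ad: "(\<lambda>m. f m + g m) \<in> I" if "f \<in> I" "g \<in> I" for f g
    using additive_subgroup.a_closed[OF ideal.axioms(1)[OF assms(5)] that] unfolding add .
  have sb: "(\<lambda>m. f m - g m) \<in> I" if "f \<in> I" "g \<in> I" for f g
    using ad[OF that(1) sc[OF that(2), of "-1"]] by simp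
  have z: "(\<lambda>_. 0) \<in> I" using additive_subgroup.zero_closed[OF ideal.axioms(1)[OF assms(5)]] by (simp add: Rring_def)
  define S where "S = (\<lambda>f. f k) ` I"
  have "\<exists>n\<in>S. \<forall>s\<in>S. n dvd s"
  proof (rule int_subgroup_principal)
    show "0 \<in> S" using z unfolding S_def by force
    fix a b assume "a \<in> S" "b \<in> S"
    then obtain f g where "f \<in> I" "g \<in> I" "a = f k" "b = g k" unfolding S_def by blast
    then show "a - b \<in> S" unfolding S_def using sb[of f g] by force
  qed
  then obtain n where n: "n \<in> S" "\<forall>s\<in>S. n dvd s" by blast
  obtain f0 where f0: "f0 \<in> I" "f0 k = n" using n(1) unfolding S_def by blast
  define nF where "nF = Rmult p l (Rint l n) (F p l k)"
  have nF: "nF = (\<lambda>m. n * F p l k m)" unfolding nF_def by (rule Rint_mult[OF Fk])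
  have nFc: "nF \<in> Rcarrier l" using Fk by (auto simp: nF Rcarrier_def)
  have "(\<lambda>m. f0 m - (f0 m - f0 k * F p l k m)) \<in> I"
    by (rule sb[OF f0(1)]) (use dec[of f0] AI IA f0 in blast)
  then have nFI: "nF \<in> I" using f0 by (simp add: nF)
  define K where "K = genideal (Rring p l) (insert nF Gs)"
  have Ki: "ideal K (Rring p l)" unfolding K_def
    by (rule I.genideal_ideal) (use Gc nFc car in auto)
  have GK: "insert nF Gs \<subseteq> K" unfolding K_def
    by (rule I.genideal_self) (use Gc nFc car in auto)
  interpret K: ideal K "Rring p l" by (rule Ki)
  have AK: "A p l (k+1) \<subseteq> K" by (rule A_sub[OF R Ki]) (use GK in \<open>auto simp: Gs_def\<close>)
  have "I = K"
  proof
    show "K \<subseteq> I" unfolding K_def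
      by (rule I.genideal_minimal[OF assms(5)]) (use nFI GJ1 AJ1 assms(6) J1_def in blast)
    show "I \<subseteq> K"
    proof
      fix f assume f: "f \<in> I"
      then have "f k \<in> S" unfolding S_def by blast
      then obtain c where c: "f k = n * c" using n(2) by blast
      have a1: "(\<lambda>m. f m - f k * F p l k m) \<in> K" using dec[of f] f IA AK by blast
      have "Rint l c \<otimes>\<^bsub>Rring p l\<^esub> nF \<in> K" using GK rc by (intro K.I_l_closed) auto
      then have a2: "(\<lambda>m. c * nF m) \<in> K" unfolding mul Rint_mult[OF nFc] .
      have "(\<lambda>m. f m - f k * F p l k m) \<oplus>\<^bsub>Rring p l\<^esub> (\<lambda>m. c * nF m) \<in> K"
        using additive_subgroup.a_closed[OF ideal.axioms(1)[OF Ki] a1 a2] .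
      moreover have "(\<lambda>m. f m - f k * F p l k m) \<oplus>\<^bsub>Rring p l\<^esub> (\<lambda>m. c * nF m) = f"
        unfolding add nF c by (simp add: algebra_simps)
      ultimately show "f \<in> K" by simp
    qed
  qed
  then show ?thesis unfolding K_def nF_def Gs_def by blast
qed



end
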